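(* Let $\sigma_a$ be any attacker mixed strategy and $0<\epsilon\le n$. Run the greedy algorithm on the function $g(\cdot\mid\sigma_a)$ with a budget of $\ln\left(\frac{n}{\epsilon}\right)k_d$ elements, producing a set $S_d$. Then $$\mathbb{E}_{S_a\sim\sigma_a}[f(S_d,S_a)]\le\min_{|S^*|\le k_d}\mathbb{E}_{S_a\sim\sigma_a}[f(S^*,S_a)]+\epsilon.$$
   Context: Setting: $n$ voters $V$, channels $C$, edge probabilities $p_{uv},q_{uv}\in[0,1]$ (0 for non-edges), known preferences $\theta_v\in\{0,1\}$, and $f(S_d,S_a)=\sum_{v\in V}\theta_v\left(\prod_{u\in S_d}(1-q_{uv})\right)\left(1-\prod_{u\in S_a}(1-p_{uv})\right)$. An attacker mixed strategy $\sigma_a$ is a distribution over subsets of $C$ of size at most $k_a$. Define $g(S_d\mid\sigma_a)=\mathbb{E}_{S_a\sim\sigma_a}[f(\emptyset,S_a)-f(S_d,S_a)]$. The greedy algorithm with budget $B$ starts from $\emptyset$ and for $B$ steps adds a channel maximizing the marginal gain of $g$. *)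

theory Defs
  imports "HOL-Probability.Probability"
begin

definition fobj :: "'v set \<Rightarrow> ('c \<Rightarrow> 'v \<Rightarrow> real) \<Rightarrow> ('c \<Rightarrow> 'v \<Rightarrow> real) \<Rightarrow> ('v \<Rightarrow> real)
    \<Rightarrow> 'c set \<Rightarrow> 'c set \<Rightarrow> real" where
  "fobj V p q \<theta> Sd Sa =
     (\<Sum>v\<in>V. \<theta> v * (\<Prod>u\<in>Sd. 1 - q u v) * (1 - (\<Prod>u\<in>Sa. 1 - p u v)))"

definition gdef :: "'v set \<Rightarrow> ('c \<Rightarrow> 'v \<Rightarrow> real) \<Rightarrow> ('c \<Rightarrow> 'v \<Rightarrow> real) \<Rightarrow> ('v \<Rightarrow> real)
    \<Rightarrow> 'c set pmf \<Rightarrow> 'c set \<Rightarrow> real" where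
  "gdef V p q \<theta> \<sigma> Sd =
     measure_pmf.expectation \<sigma> (\<lambda>Sa. fobj V p q \<theta> {} Sa - fobj V p q \<theta> Sd Sa)"

text \<open>S is a possible output of the greedy algorithm with budget B on set function g over
  ground set C: starting from the empty set, B times add a channel of C maximising the
  marginal gain (ties broken arbitrarily).\<close>
definition greedy_output :: "('c set \<Rightarrow> real) \<Rightarrow> 'c set \<Rightarrow> nat \<Rightarrow> 'c set \<Rightarrow> bool" where
  "greedy_output g C B S \<longleftrightarrow>
     (\<exists>cs. length cs = B \<and> S = set cs \<and>
        (\<forall>i<B. cs ! i \<in> C \<and>
           (\<forall>c\<in>C. g (insert c (set (take i cs))) - g (set (take i cs))
                 \<le> g (insert (cs ! i) (set (take i cs))) - g (set (take i cs)))))"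

end

theory Submission
  imports Defs
begin

lemma prod_01:
  fixes x :: "'c \<Rightarrow> real"
  assumes "\<And>c. 0 \<le> x c \<and> x c \<le> 1"
  shows "0 \<le> prod x A \<and> prod x A \<le> 1"
  using assms by (simp add: prod_nonneg prod_le_1)

lemma prod_sub:
  fixes x :: "'c \<Rightarrow> real"
  assumes "finite T" "\<And>c. 0 \<le> x c \<and> x c \<le> 1"
  shows "1 - prod x T \<le> (\<Sum>c\<in>T. 1 - x c)"
  using assms(1)
proof (induction T rule: finite_induct)
  case empty then show ?case by simp
next
  case (insert t T)
  have h: "0 \<le> prod x T \<and> prod x T \<le> 1" using prod_01 assms(2) by blast
  have "1 - x t * prod x T \<le> (1 - x t) + (1 - prod x T)"
  proof -
    have "0 \<le> (1 - x t) * (1 - prod x T)" using h assms(2)[of t] by simp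
    then show ?thesis by (simp add: algebra_simps)
  qed
  then show ?case using insert by simp
qed

lemma prod_anti:
  fixes x :: "'c \<Rightarrow> real"
  assumes "finite B" "A \<subseteq> B" "\<And>c. 0 \<le> x c \<and> x c \<le> 1"
  shows "prod x B \<le> prod x A"
proof -
  have "prod x B = prod x A * prod x (B - A)"
    using assms(1,2) by (metis prod.subset_diff mult.commute)
  moreover have "0 \<le> prod x A" "0 \<le> prod x (B - A)" "prod x (B - A) \<le> 1"
    using prod_01 assms(3) by blast+
  ultimately show ?thesis by (simp add: mult_left_le)
qed

lemma key_v:
  fixes x :: "'c \<Rightarrow> real"
  assumes "finite S" "finite T" "\<And>c. 0 \<le> x c \<and> x c \<le> 1"
  shows "prod x S - prod x (S \<union> T) \<le> (\<Sum>c\<in>T. prod x S - prod x (insert c S))"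
  using assms(2)
proof (induction T rule: finite_induct)
  case empty then show ?case by simp
next
  case (insert t T)
  have "prod x (S \<union> T) - prod x (insert t (S \<union> T)) \<le> prod x S - prod x (insert t S)"
  proof (cases "t \<in> S \<union> T")
    case True
    then have "insert t (S \<union> T) = S \<union> T" by blast
    moreover have "prod x (insert t S) \<le> prod x S"
      using prod_anti[of "insert t S" S x] assms by blast
    ultimately show ?thesis by simp
  next
    case False
    then have "t \<notin> S" by blast
    have e1: "prod x (insert t (S \<union> T)) = x t * prod x (S \<union> T)"
      using False assms insert by simp
    have e2: "prod x (insert t S) = x t * prod x S" using \<open>t \<notin> S\<close> assms by simp
    have "prod x (S \<union> T) \<le> prod x S" using prod_anti[of "S \<union> T" S x] assms insert by blast
    moreover have "0 \<le> 1 - x t" using assms(3)[of t] by simp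
    ultimately have "prod x (S \<union> T) * (1 - x t) \<le> prod x S * (1 - x t)"
      by (simp add: mult_right_mono)
    then show ?thesis using e1 e2 by (simp add: algebra_simps)
  qed
  then show ?case using insert by simp
qed


lemma phi_key:
  fixes a :: "'v \<Rightarrow> real" and x :: "'c \<Rightarrow> 'v \<Rightarrow> real"
  assumes "finite S" "finite T" "\<And>c v. 0 \<le> x c v \<and> x c v \<le> 1" "\<And>v. 0 \<le> a v"
  shows "(\<Sum>v\<in>V. a v * (\<Prod>u\<in>S. x u v)) - (\<Sum>v\<in>V. a v * (\<Prod>u\<in>S \<union> T. x u v))
     \<le> (\<Sum>c\<in>T. (\<Sum>v\<in>V. a v * (\<Prod>u\<in>S. x u v)) - (\<Sum>v\<in>V. a v * (\<Prod>u\<in>insert c S. x u v)))"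
proof -
  have "(\<Sum>v\<in>V. a v * (\<Prod>u\<in>S. x u v)) - (\<Sum>v\<in>V. a v * (\<Prod>u\<in>S \<union> T. x u v))
     = (\<Sum>v\<in>V. a v * ((\<Prod>u\<in>S. x u v) - (\<Prod>u\<in>S \<union> T. x u v)))"
    by (simp add: sum_subtractf algebra_simps)
  also have "\<dots> \<le> (\<Sum>v\<in>V. a v * (\<Sum>c\<in>T. (\<Prod>u\<in>S. x u v) - (\<Prod>u\<in>insert c S. x u v)))"
    apply (rule sum_mono)
    apply (rule mult_left_mono)
    using key_v[OF assms(1,2), of "\<lambda>u. x u _"] assms(3,4) by auto
  also have "\<dots> = (\<Sum>c\<in>T. \<Sum>v\<in>V. a v * ((\<Prod>u\<in>S. x u v) - (\<Prod>u\<in>insert c S. x u v)))"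
    by (simp add: sum_distrib_left sum.swap[of _ T V])
  also have "\<dots> = (\<Sum>c\<in>T. (\<Sum>v\<in>V. a v * (\<Prod>u\<in>S. x u v)) - (\<Sum>v\<in>V. a v * (\<Prod>u\<in>insert c S. x u v)))"
    by (simp add: sum_subtractf algebra_simps)
  finally show ?thesis .
qed

lemma geom:
  fixes k B :: nat and n e :: real
  assumes "k > 0" "0 < e" "e \<le> n" "real B \<ge> ln (n / e) * real k"
  shows "(1 - 1 / real k) ^ B \<le> e / n"
proof -
  have "0 \<le> 1 - 1 / real k" using assms(1) by simp
  then have "(1 - 1 / real k) ^ B \<le> exp (- 1 / real k) ^ B"
    using exp_ge_add_one_self[of "- 1 / real k"] by (intro power_mono) auto
  also have "\<dots> = exp (real B * (- 1 / real k))" using exp_of_nat_mult[of B "- 1 / real k"] by simp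
  also have "\<dots> \<le> exp (- ln (n / e))"
  proof -
    have "ln (n / e) \<le> real B / real k" using assms(1,4) by (simp add: field_simps)
    then show ?thesis by simp
  qed
  also have "\<dots> = e / n" using assms by (simp add: ln_div exp_minus exp_diff)
  finally show ?thesis .
qed


theorem mainTheorem5:
  fixes V :: "'v set" and C :: "'c set"
    and p q :: "'c \<Rightarrow> 'v \<Rightarrow> real" and \<theta> :: "'v \<Rightarrow> real"
    and \<sigma> :: "'c set pmf" and ka kd :: nat and \<epsilon> :: real and Sd :: "'c set"
  assumes "finite V" and "finite C"
    and "\<And>u v. 0 \<le> p u v \<and> p u v \<le> 1"
    and "\<And>u v. 0 \<le> q u v \<and> q u v \<le> 1"
    and "\<And>u v. u \<notin> C \<or> v \<notin> V \<Longrightarrow> p u v = 0 \<and> q u v = 0"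
    and "\<And>v. \<theta> v \<in> {0, 1}"
    and "\<And>Sa. Sa \<in> set_pmf \<sigma> \<Longrightarrow> Sa \<subseteq> C \<and> card Sa \<le> ka"
    and "0 < \<epsilon>" and "\<epsilon> \<le> real (card V)"
    and "greedy_output (gdef V p q \<theta> \<sigma>) C (nat \<lceil>ln (real (card V) / \<epsilon>) * real kd\<rceil>) Sd"
  shows "\<forall>Sstar. Sstar \<subseteq> C \<and> card Sstar \<le> kd \<longrightarrow>
           measure_pmf.expectation \<sigma> (\<lambda>Sa. fobj V p q \<theta> Sd Sa)
             \<le> measure_pmf.expectation \<sigma> (\<lambda>Sa. fobj V p q \<theta> Sstar Sa) + \<epsilon>"
proof (intro allI impI)
  fix T assume T: "T \<subseteq> C \<and> card T \<le> kd"
  have finT: "finite T" using T assms(2) finite_subset by blast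
  define w where "w v Sa = \<theta> v * (1 - (\<Prod>u\<in>Sa. 1 - p u v))" for v Sa
  define a where "a v = measure_pmf.expectation \<sigma> (w v)" for v
  define x where "x u v = 1 - q u v" for u v
  define \<phi> where "\<phi> S = (\<Sum>v\<in>V. a v * (\<Prod>u\<in>S. x u v))" for S
  have x01: "\<And>u v. 0 \<le> x u v \<and> x u v \<le> 1" using assms(4) unfolding x_def by (simp add: algebra_simps)
  have finpmf: "finite (set_pmf \<sigma>)"
    using assms(7) assms(2) by (meson Pow_iff finite_Pow_iff finite_subset subsetI)
  have integ: "\<And>f :: 'c set \<Rightarrow> real. integrable (measure_pmf \<sigma>) f" by (rule integrable_measure_pmf_finite[OF finpmf])
  have w01: "0 \<le> w v Sa \<and> w v Sa \<le> 1" for v Sa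
  proof -
    have "0 \<le> (\<Prod>u\<in>Sa. 1 - p u v) \<and> (\<Prod>u\<in>Sa. 1 - p u v) \<le> 1"
      using prod_01[of "\<lambda>u. 1 - p u v" Sa] assms(3) by (simp add: algebra_simps)
    then show ?thesis using assms(6)[of v] unfolding w_def by auto
  qed
  have a01: "0 \<le> a v \<and> a v \<le> 1" for v
  proof
    show "0 \<le> a v" unfolding a_def using w01 by (simp add: integral_nonneg_AE)
    have "a v \<le> measure_pmf.expectation \<sigma> (\<lambda>_. 1::real)"
      unfolding a_def using w01 integ by (intro integral_mono) auto
    then show "a v \<le> 1" by simp
  qed
  have Ef: "measure_pmf.expectation \<sigma> (\<lambda>Sa. fobj V p q \<theta> S Sa) = \<phi> S" for S
  proof -
    have "(\<lambda>Sa. fobj V p q \<theta> S Sa) = (\<lambda>Sa. \<Sum>v\<in>V. (\<Prod>u\<in>S. x u v) * w v Sa)"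
      unfolding fobj_def w_def x_def by (auto simp: algebra_simps)
    then have "measure_pmf.expectation \<sigma> (\<lambda>Sa. fobj V p q \<theta> S Sa)
       = (\<Sum>v\<in>V. measure_pmf.expectation \<sigma> (\<lambda>Sa. (\<Prod>u\<in>S. x u v) * w v Sa))"
      using integ by (simp add: Bochner_Integration.integral_sum)
    also have "\<dots> = \<phi> S" unfolding \<phi>_def a_def by (simp add: mult.commute)
    finally show ?thesis .
  qed
  have G: "gdef V p q \<theta> \<sigma> S = \<phi> {} - \<phi> S" for S
  proof -
    have "gdef V p q \<theta> \<sigma> S = measure_pmf.expectation \<sigma> (\<lambda>Sa. fobj V p q \<theta> {} Sa)
       - measure_pmf.expectation \<sigma> (\<lambda>Sa. fobj V p q \<theta> S Sa)"
      unfolding gdef_def using integ by (simp add: Bochner_Integration.integral_diff)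
    then show ?thesis using Ef by simp
  qed
  have phi_nonneg: "0 \<le> \<phi> S" for S
    unfolding \<phi>_def using a01 prod_01[of "\<lambda>u. x u _"] x01 by (intro sum_nonneg mult_nonneg_nonneg) auto
  have phi0: "\<phi> {} \<le> real (card V)"
  proof -
    have "\<phi> {} \<le> (\<Sum>v\<in>V. 1)" unfolding \<phi>_def using a01 by (intro sum_mono) auto
    then show ?thesis by simp
  qed
  have phi_anti: "finite B \<Longrightarrow> A \<subseteq> B \<Longrightarrow> \<phi> B \<le> \<phi> A" for A B
    unfolding \<phi>_def using a01 prod_anti[of B A "\<lambda>u. x u _"] x01
    by (intro sum_mono mult_left_mono) auto
  define B where "B = nat \<lceil>ln (real (card V) / \<epsilon>) * real kd\<rceil>"
  obtain cs where cs: "length cs = B" "Sd = set cs"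
    "\<And>i c. i < B \<Longrightarrow> c \<in> C \<Longrightarrow> \<phi> (insert (cs ! i) (set (take i cs))) \<le> \<phi> (insert c (set (take i cs)))"
    "\<And>i. i < B \<Longrightarrow> cs ! i \<in> C"
    using assms(10) unfolding greedy_output_def B_def[symmetric] G by force
  show "measure_pmf.expectation \<sigma> (\<lambda>Sa. fobj V p q \<theta> Sd Sa)
             \<le> measure_pmf.expectation \<sigma> (\<lambda>Sa. fobj V p q \<theta> T Sa) + \<epsilon>"
  proof (cases "kd = 0")
    case True
    then have "T = {}" using T finT by simp
    then show ?thesis unfolding Ef using phi_anti[of Sd "{}"] cs(2) assms(8) by simp
  next
    case False
    let ?k = "real kd"
    define d where "d i = \<phi> (set (take i cs)) - \<phi> T" for i
    have step: "d (Suc i) \<le> (1 - 1 / ?k) * d i" if "i < B" for i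
    proof -
      let ?S = "set (take i cs)"
      have ins: "set (take (Suc i) cs) = insert (cs ! i) ?S"
        using that cs(1) by (simp add: take_Suc_conv_app_nth)
      let ?gain = "\<phi> ?S - \<phi> (insert (cs ! i) ?S)"
      have "\<phi> ?S - \<phi> T \<le> \<phi> ?S - \<phi> (?S \<union> T)"
        using phi_anti[of "?S \<union> T" T] finT by auto
      also have "\<dots> \<le> (\<Sum>c\<in>T. \<phi> ?S - \<phi> (insert c ?S))"
        unfolding \<phi>_def using phi_key[of ?S T x a V] finT x01 a01 by auto
      also have "\<dots> \<le> (\<Sum>c\<in>T. ?gain)"
        using cs(3)[OF that] T by (intro sum_mono) auto
      also have "\<dots> = real (card T) * ?gain" by simp
      also have "\<dots> \<le> ?k * ?gain"
        using T phi_anti[of "insert (cs ! i) ?S" ?S] by (intro mult_right_mono) auto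
      finally have "d i \<le> ?k * ?gain" unfolding d_def .
      moreover have "d (Suc i) = d i - ?gain" unfolding d_def ins by simp
      moreover have "d i / ?k \<le> ?gain" using \<open>d i \<le> ?k * ?gain\<close> False
        by (simp add: pos_divide_le_eq mult.commute)
      moreover have "(1 - 1 / ?k) * d i = d i - d i / ?k" by (simp add: algebra_simps)
      ultimately show ?thesis by linarith
    qed
    have dpow: "i \<le> B \<Longrightarrow> d i \<le> (1 - 1 / ?k) ^ i * d 0" for i
    proof (induction i)
      case 0 then show ?case by simp
    next
      case (Suc i)
      have "0 \<le> 1 - 1 / ?k" using False by simp
      then have "(1 - 1 / ?k) * d i \<le> (1 - 1 / ?k) * ((1 - 1 / ?k) ^ i * d 0)"
        using Suc by (intro mult_left_mono) auto
      then show ?case using step[of i] Suc by simp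
    qed
    have d0: "0 \<le> d 0" "d 0 \<le> real (card V)"
      using phi_anti[of T "{}"] finT phi0 phi_nonneg[of T] unfolding d_def by auto
    have Bge: "real B \<ge> ln (real (card V) / \<epsilon>) * ?k" unfolding B_def by linarith
    have pw: "(1 - 1 / ?k) ^ B \<le> \<epsilon> / real (card V)"
      using geom[OF _ assms(8,9) Bge] False by simp
    have "d B \<le> (1 - 1 / ?k) ^ B * d 0" using dpow by simp
    also have "\<dots> \<le> (\<epsilon> / real (card V)) * d 0" using pw d0 by (intro mult_right_mono) auto
    also have "\<dots> \<le> (\<epsilon> / real (card V)) * real (card V)" using d0 assms(8) by (intro mult_left_mono) auto
    also have "\<dots> = \<epsilon>" using assms(8,9) by simp
    finally have "d B \<le> \<epsilon>" .
    moreover have "set (take B cs) = Sd" using cs(1,2) by simp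
    ultimately show ?thesis unfolding Ef d_def by simp
  qed
qed

end
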